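(* For every $k\ge2$ and every $n\ge2$, the families $\mathrm{SLT}_k$ and $\mathrm{REG}_n^Z$ are incomparable (neither is contained in the other); likewise, for every $n\ge 2$, the families $\mathrm{SLT}$ and $\mathrm{REG}_n^Z$ are incomparable.
   Context: Strictly locally testable languages: let $V$ be an alphabet and $k\ge1$. For $B,I,E\subseteq V^k$ and $F\subseteq V^{\le k-1}$, $\mathrm{slt}(B,I,E,F)$ is the language over $V$ consisting of all words in $F$ together with all words $a_1\cdots a_n$ ($a_i\in V$, $n\ge k$) with $a_1\cdots a_k\in B$, $a_{j+1}\cdots a_{j+k}\in I$ for all $1\le j\le n-k-1$, and $a_{n-k+1}\cdots a_n\in E$. $\mathrm{SLT}_k$ is the family of languages of this form and $\mathrm{SLT}=\bigcup_{k\ge1}\mathrm{SLT}_k$. For a regular language $L\subseteq V^*$, $\mathrm{State}(L)$ is the minimum number of states of a deterministic finite automaton over $V$ with total transition function accepting $L$; $\mathrm{REG}_n^Z=\{L\text{ regular}:\mathrm{State}(L)\le n\}$. *)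

theory Defs
  imports Main
begin

definition alphabet :: "nat set \<Rightarrow> bool" where
  "alphabet V \<longleftrightarrow> finite V \<and> V \<noteq> {}"

definition words_eq :: "nat set \<Rightarrow> nat \<Rightarrow> nat list set" where
  "words_eq V k = {w. set w \<subseteq> V \<and> length w = k}"

definition words_lt :: "nat set \<Rightarrow> nat \<Rightarrow> nat list set" where
  "words_lt V k = {w. set w \<subseteq> V \<and> length w \<le> k - 1}"

text \<open>slt(B,I,E,F): the word a_1...a_n (0-indexed list w) has prefix a_1..a_k in B,
  every factor a_{j+1}..a_{j+k} (= take k (drop j w)) for 1 <= j <= n-k-1 in I,
  and suffix a_{n-k+1}..a_n (= drop (n-k) w) in E.\<close>
definition slt :: "nat set \<Rightarrow> nat \<Rightarrow> nat list set \<Rightarrow> nat list set \<Rightarrow> nat list set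
                   \<Rightarrow> nat list set \<Rightarrow> nat list set" where
  "slt V k B I E F = F \<union>
     {w. set w \<subseteq> V \<and> length w \<ge> k \<and> take k w \<in> B
         \<and> (\<forall>j. 1 \<le> j \<and> j \<le> length w - k - 1 \<longrightarrow> take k (drop j w) \<in> I)
         \<and> drop (length w - k) w \<in> E}"

definition SLT_k :: "nat set \<Rightarrow> nat \<Rightarrow> nat list set \<Rightarrow> bool" where
  "SLT_k V k L \<longleftrightarrow> k \<ge> 1 \<and> (\<exists>B I E F. B \<subseteq> words_eq V k \<and> I \<subseteq> words_eq V k
      \<and> E \<subseteq> words_eq V k \<and> F \<subseteq> words_lt V k \<and> L = slt V k B I E F)"

definition SLT :: "nat set \<Rightarrow> nat list set \<Rightarrow> bool" where
  "SLT V L \<longleftrightarrow> (\<exists>k\<ge>1. SLT_k V k L)"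

definition is_dfa :: "nat set \<Rightarrow> nat set \<Rightarrow> nat \<Rightarrow> (nat \<Rightarrow> nat \<Rightarrow> nat) \<Rightarrow> nat set \<Rightarrow> bool" where
  "is_dfa V Q q0 d Fs \<longleftrightarrow> finite Q \<and> q0 \<in> Q \<and> Fs \<subseteq> Q
      \<and> (\<forall>q\<in>Q. \<forall>a\<in>V. d q a \<in> Q)"

definition dfa_lang :: "nat set \<Rightarrow> nat \<Rightarrow> (nat \<Rightarrow> nat \<Rightarrow> nat) \<Rightarrow> nat set \<Rightarrow> nat list set" where
  "dfa_lang V q0 d Fs = {w. set w \<subseteq> V \<and> foldl d q0 w \<in> Fs}"

definition accepts_with :: "nat set \<Rightarrow> nat \<Rightarrow> nat list set \<Rightarrow> bool" where
  "accepts_with V m L \<longleftrightarrow> (\<exists>Q q0 d Fs. is_dfa V Q q0 d Fs \<and> card Q = m \<and> L = dfa_lang V q0 d Fs)"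

definition regular :: "nat set \<Rightarrow> nat list set \<Rightarrow> bool" where
  "regular V L \<longleftrightarrow> (\<exists>m. accepts_with V m L)"

definition State :: "nat set \<Rightarrow> nat list set \<Rightarrow> nat" where
  "State V L = (LEAST m. accepts_with V m L)"

definition REG_Z :: "nat set \<Rightarrow> nat \<Rightarrow> nat list set \<Rightarrow> bool" where
  "REG_Z V n L \<longleftrightarrow> regular V L \<and> State V L \<le> n"

end

theory Submission
  imports Defs
begin

definition succ_list :: "nat list \<Rightarrow> bool" where
  "succ_list xs \<longleftrightarrow> (\<forall>p. Suc p < length xs \<longrightarrow> xs ! Suc p = Suc (xs ! p))"

lemma succ_list_upt: "succ_list [a..<b]"
  unfolding succ_list_def by auto

lemma succ_list_take: "succ_list xs \<Longrightarrow> succ_list (take k xs)"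
  unfolding succ_list_def by auto

lemma succ_list_drop: "succ_list xs \<Longrightarrow> succ_list (drop k xs)"
  unfolding succ_list_def by (auto simp: add.commute[of k])

definition SS :: "nat set \<Rightarrow> nat \<Rightarrow> nat list set" where
  "SS V k = {xs. set xs \<subseteq> V \<and> length xs = k \<and> succ_list xs}"

lemma adj:
  assumes w: "w \<in> slt V k (SS V k) (SS V k) (SS V k) {}" and k: "k \<ge> 2"
    and p: "Suc p < length w"
  shows "w ! Suc p = Suc (w ! p)"
proof -
  have len: "length w \<ge> k" and tk: "succ_list (take k w)"
    and mid: "\<And>j. 1 \<le> j \<Longrightarrow> j \<le> length w - k - 1 \<Longrightarrow> succ_list (take k (drop j w))"
    and e: "succ_list (drop (length w - k) w)"
    using w unfolding slt_def SS_def by auto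
  show ?thesis
  proof (cases "Suc p < k")
    case True
    have "Suc p < length (take k w)" using True p by simp
    then have "(take k w) ! Suc p = Suc ((take k w) ! p)" using tk unfolding succ_list_def by blast
    then show ?thesis using True by simp
  next
    case False
    define j where "j = Suc (Suc p) - k"
    have j1: "j \<ge> 1" using False k unfolding j_def by auto
    have jl: "j \<le> length w - k" using p False len unfolding j_def by auto
    have sl: "succ_list (take k (drop j w))"
    proof (cases "j \<le> length w - k - 1")
      case True then show ?thesis using mid j1 by auto
    next
      case False
      then have "j = length w - k" using jl by auto
      then have "take k (drop j w) = drop (length w - k) w" using len by simp
      then show ?thesis using e by simp
    qed
    have lk: "length (take k (drop j w)) = k" using jl len by auto
    have "Suc (k - 2) < length (take k (drop j w))" using lk k by auto
    then have "(take k (drop j w)) ! Suc (k-2) = Suc ((take k (drop j w)) ! (k-2))"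
      using sl unfolding succ_list_def by blast
    moreover have "j + (k - 2) = p" "j + Suc (k-2) = Suc p" using False k unfolding j_def by auto
    ultimately show ?thesis using k jl len p by (auto simp: nth_take nth_drop)
  qed
qed

lemma upt_mem:
  assumes k: "k \<ge> 1" "k \<le> m" and m: "m \<le> Suc N"
  shows "[0..<m] \<in> slt {0..N} k (SS {0..N} k) (SS {0..N} k) (SS {0..N} k) {}"
proof -
  have sV: "set [0..<m] \<subseteq> {0..N}" using m by auto
  have win: "take k (drop j [0..<m]) \<in> SS {0..N} k" if "j \<le> m - k" for j
  proof -
    have "set (take k (drop j [0..<m])) \<subseteq> {0..N}"
      using sV set_take_subset set_drop_subset by (meson subset_trans)
    moreover have "length (take k (drop j [0..<m])) = k" using that k by simp
    moreover have "succ_list (take k (drop j [0..<m]))"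
      by (intro succ_list_take succ_list_drop succ_list_upt)
    ultimately show ?thesis unfolding SS_def by blast
  qed
  have e: "drop (m - k) [0..<m] \<in> SS {0..N} k"
    using win[of "m-k"] k by simp
  have b: "take k [0..<m] \<in> SS {0..N} k" using win[of 0] by simp
  have "\<forall>j. 1 \<le> j \<and> j \<le> length [0..<m] - k - 1 \<longrightarrow> take k (drop j [0..<m]) \<in> SS {0..N} k"
  proof (intro allI impI)
    fix j assume "1 \<le> j \<and> j \<le> length [0..<m] - k - 1"
    moreover have "length [0..<m] = m" by simp
    ultimately have "j \<le> m - k" by linarith
    then show "take k (drop j [0..<m]) \<in> SS {0..N} k" by (rule win)
  qed
  moreover have "drop (length [0..<m] - k) [0..<m] \<in> SS {0..N} k" using e by simp
  moreover have "length [0..<m] \<ge> k" using k by simp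
  ultimately show ?thesis unfolding slt_def using sV b by blast
qed

lemma foldl_in: "is_dfa V Q q0 d Fs \<Longrightarrow> q \<in> Q \<Longrightarrow> set w \<subseteq> V \<Longrightarrow> foldl d q w \<in> Q"
  by (induction w arbitrary: q) (auto simp: is_dfa_def)

lemma not_REG:
  assumes "\<And>Q q0 d Fs. is_dfa V Q q0 d Fs \<Longrightarrow> L = dfa_lang V q0 d Fs \<Longrightarrow> card Q > n"
  shows "\<not> REG_Z V n L"
proof
  assume "REG_Z V n L"
  then obtain m where am: "accepts_with V m L" and le: "State V L \<le> n"
    unfolding REG_Z_def regular_def by auto
  have "accepts_with V (State V L) L" using am unfolding State_def by (rule LeastI)
  then obtain Q q0 d Fs where D: "is_dfa V Q q0 d Fs" and c: "card Q = State V L"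
    and LL: "L = dfa_lang V q0 d Fs"
    unfolding accepts_with_def by auto
  have "card Q > n" using assms(1)[OF D LL] .
  then show False using le c by simp
qed

lemma partA:
  assumes k: "k \<ge> 2"
  shows "\<exists>V L. alphabet V \<and> SLT_k V k L \<and> \<not> REG_Z V n L"
proof -
  define N where "N = n + k + 1"
  define V where "V = {0..N}"
  define L where "L = slt V k (SS V k) (SS V k) (SS V k) {}"
  have al: "alphabet V" unfolding V_def alphabet_def by auto
  have sl: "SLT_k V k L" unfolding SLT_k_def L_def using k
    by (intro conjI exI[of _ "SS V k"] exI[of _ "{}"]) (auto simp: SS_def words_eq_def words_lt_def)
  have nr: "\<not> REG_Z V n L"
  proof (rule not_REG)
    fix Q q0 d Fs assume D: "is_dfa V Q q0 d Fs" and LL: "L = dfa_lang V q0 d Fs"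
    define f where "f i = foldl d q0 [0..<i]" for i
    have fQ: "f ` {1..n+1} \<subseteq> Q"
    proof
      fix q assume "q \<in> f ` {1..n+1}"
      then obtain i where i: "i \<in> {1..n+1}" "q = f i" by auto
      have "set [0..<i] \<subseteq> V" using i unfolding V_def N_def by auto
      then show "q \<in> Q" using foldl_in[OF D] D i unfolding f_def is_dfa_def by auto
    qed
    have inj: "inj_on f {1..n+1}"
    proof -
      have main: False if ij: "i < j" "i \<ge> 1" "j \<le> n+1" "f i = f j" for i j
      proof -
        define z where "z = [i..<i+k]"
        have "[0..<i] @ z = [0..<i+k]" unfolding z_def using upt_add_eq_append[of 0 i k] by simp
        moreover have "[0..<i+k] \<in> L" unfolding L_def V_def using upt_mem[of k "i+k" N] k ij
          unfolding N_def by auto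
        ultimately have "[0..<i] @ z \<in> dfa_lang V q0 d Fs" using LL by simp
        moreover have "set z \<subseteq> V" "set [0..<j] \<subseteq> V" using ij unfolding z_def V_def N_def by auto
        ultimately have "[0..<j] @ z \<in> dfa_lang V q0 d Fs" using ij(4)
          unfolding dfa_lang_def f_def by auto
        then have w: "[0..<j] @ z \<in> slt V k (SS V k) (SS V k) (SS V k) {}" using LL L_def by simp
        have "Suc (j - 1) < length ([0..<j] @ z)" using ij k unfolding z_def by auto
        from adj[OF w k this] have "([0..<j] @ z) ! j = Suc (([0..<j] @ z) ! (j-1))"
          using ij by simp
        moreover have "([0..<j] @ z) ! j = i" using k unfolding z_def by (simp add: nth_append)
        moreover have "([0..<j] @ z) ! (j-1) = j - 1" using ij by (simp add: nth_append)
        ultimately show False using ij by simp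
      qed
      show ?thesis unfolding inj_on_def
      proof (intro ballI impI)
        fix i j assume i: "i \<in> {1..n+1}" and j: "j \<in> {1..n+1}" and e: "f i = f j"
        show "i = j"
        proof (rule ccontr)
          assume "i \<noteq> j"
          then consider "i < j" | "j < i" by linarith
          then show False
          proof cases
            case 1 then show False using main[of i j] i j e by auto
          next
            case 2 then show False using main[of j i] i j e by auto
          qed
        qed
      qed
    qed
    have "finite Q" using D unfolding is_dfa_def by auto
    from card_inj_on_le[OF inj fQ this] show "card Q > n" by simp
  qed
  show ?thesis using al sl nr by blast
qed

definition Lev :: "nat list set" where
  "Lev = {w. set w \<subseteq> {0} \<and> even (length w)}"

lemma not_slt_ev: "\<not> SLT_k {0} k Lev"
proof
  assume "SLT_k {0} k Lev"
  then obtain B I E F where k: "k \<ge> 1" and F: "F \<subseteq> words_lt {0} k"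
    and L: "Lev = slt {0} k B I E F" unfolding SLT_k_def by auto
  define m where "m = 2*k+2"
  define w where "w = replicate m (0::nat)"
  have "w \<in> Lev" unfolding Lev_def m_def w_def by auto
  moreover have "w \<notin> F" using F unfolding words_lt_def m_def w_def by auto
  ultimately have wm: "take k w \<in> B \<and> (\<forall>j. 1 \<le> j \<and> j \<le> length w - k - 1 \<longrightarrow> take k (drop j w) \<in> I)
    \<and> drop (length w - k) w \<in> E" using L unfolding slt_def by blast
  have lw: "length w = m" unfolding w_def by simp
  have km: "k \<le> m" unfolding m_def by simp
  have "take k w = replicate k 0" unfolding w_def using km by (simp add: min_absorb1)
  then have B: "replicate k 0 \<in> B" using wm by simp
  have "take k (drop 1 w) \<in> I" using wm lw unfolding m_def by auto
  moreover have "take k (drop 1 w) = replicate k 0" unfolding w_def using km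
    by (simp add: min_absorb1 m_def del: replicate.simps replicate_Suc)
  ultimately have I: "replicate k 0 \<in> I" by simp
  have E: "replicate k 0 \<in> E" using wm lw unfolding w_def m_def by simp
  define v where "v = replicate (Suc m) (0::nat)"
  have lv: "length v = Suc m" unfolding v_def by simp
  have "\<forall>j. 1 \<le> j \<and> j \<le> length v - k - 1 \<longrightarrow> take k (drop j v) \<in> I"
  proof (intro allI impI)
    fix j assume "1 \<le> j \<and> j \<le> length v - k - 1"
    then have "min k (Suc m - j) = k" using lv by auto
    then have "take k (drop j v) = replicate k 0" unfolding v_def by (simp del: replicate_Suc)
    then show "take k (drop j v) \<in> I" using I by simp
  qed
  moreover have "take k v = replicate k 0" unfolding v_def using km
    by (simp add: min_absorb1 del: replicate_Suc)
  then have "take k v \<in> B" using B by simp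
  moreover have "drop (length v - k) v = replicate k 0" using lv km unfolding v_def
    by (simp del: replicate_Suc)
  then have "drop (length v - k) v \<in> E" using E by simp
  moreover have "set v \<subseteq> {0}" "k \<le> length v" unfolding v_def m_def by auto
  ultimately have "v \<in> slt {0} k B I E F" unfolding slt_def by blast
  then have "v \<in> Lev" using L by simp
  then show False unfolding Lev_def v_def m_def by simp
qed

lemma fold_ev: "q < 2 \<Longrightarrow> foldl (\<lambda>q a. (q+1) mod 2) q w = (q + length w) mod 2"
proof (induction w arbitrary: q)
  case Nil then show ?case by simp
next
  case (Cons a w)
  have "foldl (\<lambda>q a. (q+1) mod 2) q (a # w) = foldl (\<lambda>q a. (q+1) mod 2) ((q+1) mod 2) w" by simp
  also have "\<dots> = ((q+1) mod 2 + length w) mod 2" by (rule Cons.IH) simp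
  also have "\<dots> = (q + length (a # w)) mod 2" by (simp add: mod_add_left_eq)
  finally show ?case .
qed

lemma reg_ev: "n \<ge> 2 \<Longrightarrow> REG_Z {0} n Lev"
proof -
  assume n: "n \<ge> 2"
  define d where "d = (\<lambda>q::nat. \<lambda>a::nat. (q+1) mod 2)"
  have D: "is_dfa {0} {0,1} 0 d {0}" unfolding is_dfa_def d_def by auto
  have "Lev = dfa_lang {0} 0 d {0}"
  proof (rule set_eqI)
    fix w :: "nat list"
    have "foldl d 0 w = length w mod 2" using fold_ev[of 0 w] unfolding d_def by simp
    then show "w \<in> Lev \<longleftrightarrow> w \<in> dfa_lang {0} 0 d {0}"
      unfolding Lev_def dfa_lang_def by auto
  qed
  moreover have "card {0::nat,1} = 2" by simp
  ultimately have A: "accepts_with {0} 2 Lev" unfolding accepts_with_def using D by blast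
  then have "State {0} Lev \<le> 2" unfolding State_def by (rule Least_le)
  then show ?thesis using A n unfolding REG_Z_def regular_def by auto
qed

theorem mainTheorem9:
  shows "(\<forall>k n. k \<ge> 2 \<longrightarrow> n \<ge> 2 \<longrightarrow>
            (\<exists>V L. alphabet V \<and> SLT_k V k L \<and> \<not> REG_Z V n L)
          \<and> (\<exists>V L. alphabet V \<and> REG_Z V n L \<and> \<not> SLT_k V k L))
       \<and> (\<forall>n. n \<ge> 2 \<longrightarrow>
            (\<exists>V L. alphabet V \<and> SLT V L \<and> \<not> REG_Z V n L)
          \<and> (\<exists>V L. alphabet V \<and> REG_Z V n L \<and> \<not> SLT V L))"
proof -
  have al: "alphabet {0}" unfolding alphabet_def by auto
  have C: "\<exists>V L. alphabet V \<and> SLT V L \<and> \<not> REG_Z V n L" for n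
  proof -
    obtain V L where "alphabet V" "SLT_k V 2 L" "\<not> REG_Z V n L" using partA[of 2 n] by auto
    moreover have "\<exists>k\<ge>1. SLT_k V k L" using \<open>SLT_k V 2 L\<close> by (intro exI[of _ 2]) simp
    ultimately show ?thesis unfolding SLT_def by blast
  qed
  have D: "\<exists>V L. alphabet V \<and> REG_Z V n L \<and> \<not> SLT V L" if "n \<ge> 2" for n
    using al reg_ev[OF that] not_slt_ev unfolding SLT_def by blast
  have B: "\<exists>V L. alphabet V \<and> REG_Z V n L \<and> \<not> SLT_k V k L" if "n \<ge> 2" for n k
    using al reg_ev[OF that] not_slt_ev by blast
  show ?thesis
  proof (intro conjI allI impI)
    fix k n :: nat assume "k \<ge> 2" "n \<ge> 2"
    then show "\<exists>V L. alphabet V \<and> SLT_k V k L \<and> \<not> REG_Z V n L" using partA[of k n] by blast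
  next
    fix k n :: nat assume "k \<ge> 2" "n \<ge> 2"
    then show "\<exists>V L. alphabet V \<and> REG_Z V n L \<and> \<not> SLT_k V k L" by (intro B)
  next
    fix n :: nat assume "n \<ge> 2"
    show "\<exists>V L. alphabet V \<and> SLT V L \<and> \<not> REG_Z V n L" by (rule C)
  next
    fix n :: nat assume "n \<ge> 2"
    then show "\<exists>V L. alphabet V \<and> REG_Z V n L \<and> \<not> SLT V L" by (rule D)
  qed
qed

end
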